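(* Let $n\ge 3$ and let $M_t$, $t\in(-\infty,0]$, be a noncompact ancient solution of mean curvature flow in $\mathbb{R}^{n+1}$ which is strictly convex, uniformly two-convex, noncollapsed, and rotationally symmetric about the $x_{n+1}$-axis, with cross-sectional radius $r(z,t)$, extinction times $\mathcal{T}(z)$ and constants $C_1,C_2$ as in the context. Then there is $R_0$ such that whenever $z<0$, $t<\mathcal{T}(z)$ and $r(z,t)\ge R_0$, \[2(n-1)\,[\mathcal{T}(z)-t] \leq r(z,t)^2 \leq 2(n-1)\,[\mathcal{T}(z)-t] + 8C_2[\mathcal{T}(z)-t]^{\frac{1}{4}}+C_1^2.\]
   Context: Strictly convex: positive definite second fundamental form; uniformly two-convex: $\lambda_1+\lambda_2\ge\beta H$ for some $\beta>0$; noncollapsed: each $M_t$ bounds a domain and each $x\in M_t$ is touched from inside by a ball of radius $\alpha/H(x,t)$ in that domain. $M_t$ is oriented so that its noncompact end points in the positive $x_{n+1}$-direction and normalized so that the tip of $M_0$ is the origin. $r(z,t)$ is the radius of the round sphere $M_t\cap\{x_{n+1}=z\}$ (where nonempty); it satisfies $r_t=\frac{r_{zz}}{1+r_z^2}-\frac{n-1}{r}$, and $r>0$, $r_z>0$, $r_t<0$, $r_{zz}<0$. For $z<0$, $\mathcal{T}(z)$ is defined by $r(z,t)>0$ for $t<\mathcal{T}(z)$ and $\lim_{t\to\mathcal{T}(z)}r(z,t)=0$. $C_1,C_2$ are constants such that $0\le -r_{zz}(z,t)\le C_2\, r(z,t)^{-5/2}$ whenever $r(z,t)\ge C_1$ (such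 constants exist for this class of solutions). *)

theory Defs
  imports Complex_Main
begin

text \<open>Profile data of a rotationally symmetric, strictly convex, uniformly two-convex,
noncollapsed noncompact ancient mean curvature flow in R^(n+1) (tip of M_0 at the
origin, noncompact end pointing up), restricted to the region z < 0, t < T z.
r z t : radius of the cross section at height z and time t;
rz, rzz, rt : the partial derivatives r_z, r_zz, r_t;
T z : the extinction time of height z (for z < 0).\<close>

definition rot_mcf_profile ::
  "nat \<Rightarrow> (real \<Rightarrow> real \<Rightarrow> real) \<Rightarrow> (real \<Rightarrow> real \<Rightarrow> real) \<Rightarrow> (real \<Rightarrow> real \<Rightarrow> real)
     \<Rightarrow> (real \<Rightarrow> real \<Rightarrow> real) \<Rightarrow> (real \<Rightarrow> real) \<Rightarrow> bool" where
  "rot_mcf_profile n r rz rzz rt T \<longleftrightarrow>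
     (\<forall>z<0. T z \<le> 0 \<and>
        ((\<lambda>t. r z t) \<longlongrightarrow> 0) (at_left (T z)) \<and>
        (\<forall>t<T z.
           ((\<lambda>s. r z s) has_real_derivative rt z t) (at t) \<and>
           ((\<lambda>y. r y t) has_real_derivative rz z t) (at z) \<and>
           ((\<lambda>y. rz y t) has_real_derivative rzz z t) (at z) \<and>
           rt z t = rzz z t / (1 + (rz z t)\<^sup>2) - (real n - 1) / r z t \<and>
           r z t > 0 \<and> rz z t > 0 \<and> rt z t < 0 \<and> rzz z t < 0))"

end

theory Submission
  imports Defs
begin

lemma mono_aux:
  fixes f f' :: "real \<Rightarrow> real"
  assumes "a \<le> b" and "\<And>x. a \<le> x \<Longrightarrow> x \<le> b \<Longrightarrow> (f has_real_derivative f' x) (at x) \<and> f' x \<ge> 0"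
  shows "f a \<le> f b"
proof -
  have c: "continuous_on {a..b} f"
    using assms(2) by (intro DERIV_atLeastAtMost_imp_continuous_on) blast
  show ?thesis
    using DERIV_nonneg_imp_increasing_open[OF assms(1) _ c] assms(2)
    by (meson less_imp_le)
qed

lemma lower_aux:
  fixes R D Q :: "real \<Rightarrow> real" and T m :: real
  assumes der: "\<And>s. s < T \<Longrightarrow> (R has_real_derivative D s) (at s)"
    and pos: "\<And>s. s < T \<Longrightarrow> R s > 0"
    and eq: "\<And>s. s < T \<Longrightarrow> D s = Q s - m / R s"
    and qneg: "\<And>s. s < T \<Longrightarrow> Q s < 0"
    and lim: "(R \<longlongrightarrow> 0) (at_left T)"
    and st: "s < T"
  shows "2 * m * (T - s) \<le> (R s)\<^sup>2"
proof -
  define \<psi> where "\<psi> u = (R u)\<^sup>2 - 2 * m * (T - u)" for u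
  have dec: "\<psi> u \<le> \<psi> s" if "s \<le> u" "u < T" for u
  proof -
    have "(\<lambda>x. - \<psi> x) s \<le> (\<lambda>x. - \<psi> x) u"
    proof (rule mono_aux[where f = "\<lambda>x. - \<psi> x" and f' = "\<lambda>x. - (2 * R x * D x + 2 * m)"])
      fix x assume x: "s \<le> x" "x \<le> u"
      hence xT: "x < T" using that by simp
      have d: "((\<lambda>x. - \<psi> x) has_real_derivative - (2 * R x * D x + 2 * m)) (at x)"
        unfolding \<psi>_def
        by (auto intro!: derivative_eq_intros der[OF xT])
      have e: "2 * R x * D x + 2 * m = 2 * (R x * Q x)"
        using eq[OF xT] pos[OF xT] by (simp add: field_simps)
      have "R x * Q x < 0" using pos[OF xT] qneg[OF xT] by (simp add: mult_pos_neg)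
      hence "0 \<le> - (2 * R x * D x + 2 * m)" unfolding e by (simp add: mult.commute)
      with d show "((\<lambda>x. - \<psi> x) has_real_derivative - (2 * R x * D x + 2 * m)) (at x) \<and>
        0 \<le> - (2 * R x * D x + 2 * m)" by blast
    qed (use that in auto)
    thus ?thesis by simp
  qed
  have "(\<psi> \<longlongrightarrow> 0\<^sup>2 - 2 * m * (T - T)) (at_left T)"
    unfolding \<psi>_def
    by (intro tendsto_intros lim)
  hence l: "(\<psi> \<longlongrightarrow> 0) (at_left T)" by simp
  have ev: "eventually (\<lambda>u. \<psi> u \<le> \<psi> s) (at_left T)"
    using eventually_at_left_real[OF st] by eventually_elim (use dec in auto)
  have "0 \<le> \<psi> s"
    by (rule tendsto_upperbound[OF l ev]) simp
  thus ?thesis unfolding \<psi>_def by simp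
qed



lemma upper_aux:
  fixes R D Q :: "real \<Rightarrow> real" and T m C1 C2 t :: real
  assumes der: "\<And>s. s < T \<Longrightarrow> (R has_real_derivative D s) (at s)"
    and pos: "\<And>s. s < T \<Longrightarrow> R s > 0"
    and eq: "\<And>s. s < T \<Longrightarrow> D s = Q s - m / R s"
    and qneg: "\<And>s. s < T \<Longrightarrow> Q s < 0"
    and dneg: "\<And>s. s < T \<Longrightarrow> D s < 0"
    and lim: "(R \<longlongrightarrow> 0) (at_left T)"
    and bnd: "\<And>s. s < T \<Longrightarrow> R s \<ge> C1 \<Longrightarrow> - Q s \<le> C2 * R s powr (-5/2)"
    and m1: "m \<ge> 1" and C2: "C2 \<ge> 0"
    and tT: "t < T" and Rt: "R t \<ge> C1"
  shows "(R t)\<^sup>2 \<le> 2 * m * (T - t) + 8 * C2 * (T - t) powr (1/4) + C1\<^sup>2"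
proof -
  define \<phi> where "\<phi> u = (R u)\<^sup>2 - 2 * m * (T - u) - 8 * C2 * (T - u) powr (1/4)" for u
  have Rdec: "R s \<le> R u" if "t \<le> u" "u \<le> s" "s < T" for u s
  proof -
    have "(\<lambda>x. - R x) u \<le> (\<lambda>x. - R x) s"
    proof (rule mono_aux[where f = "\<lambda>x. - R x" and f' = "\<lambda>x. - D x"])
      fix x assume "u \<le> x" "x \<le> s"
      hence xT: "x < T" using that by simp
      show "((\<lambda>x. - R x) has_real_derivative - D x) (at x) \<and> 0 \<le> - D x"
        using der[OF xT] dneg[OF xT] by (auto intro!: derivative_eq_intros)
    qed (use that in auto)
    thus ?thesis by simp
  qed
  have key: "\<phi> t \<le> \<phi> s" if "t \<le> s" "s < T" "R s \<ge> C1" for s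
  proof (rule mono_aux[where f = \<phi> and f' = "\<lambda>x. 2 * R x * D x + 2 * m + 2 * C2 * (T - x) powr (-3/4)"])
    fix x assume x: "t \<le> x" "x \<le> s"
    hence xT: "x < T" using that by simp
    have Rx: "R x \<ge> C1" using Rdec[OF x that(2)] that(3) by simp
    have p: "((\<lambda>x. (T - x) powr (1/4)) has_real_derivative (1/4) * (T - x) powr (1/4 - of_nat 1) * (0 - 1)) (at x)"
      by (rule DERIV_fun_powr) (auto intro!: derivative_eq_intros simp: xT)
    have p2: "(1/4::real) * (T - x) powr (1/4 - of_nat 1) * (0 - 1) = - (1/4) * (T - x) powr (-3/4)"
      by simp
    have d: "(\<phi> has_real_derivative 2 * R x * D x + 2 * m + 2 * C2 * (T - x) powr (-3/4)) (at x)"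
      unfolding \<phi>_def using p unfolding p2
      by (auto intro!: derivative_eq_intros der[OF xT] simp: xT)
    have Rp: "R x > 0" using pos[OF xT] .
    have e: "2 * R x * D x + 2 * m = 2 * (R x * Q x)"
      using eq[OF xT] Rp by (simp add: field_simps)
    have b1: "R x * (- Q x) \<le> R x * (C2 * R x powr (-5/2))"
      using mult_left_mono[OF bnd[OF xT Rx], of "R x"] Rp by simp
    have pw: "R x * R x powr (-5/2) = R x powr (-3/2)"
    proof -
      have "R x powr (-3/2) = R x powr (1 + (-5/2))" by simp
      also have "\<dots> = R x powr 1 * R x powr (-5/2)" by (rule powr_add)
      finally show ?thesis using Rp by simp
    qed
    have low: "2 * m * (T - x) \<le> (R x)\<^sup>2"
      by (rule lower_aux[OF der pos eq qneg lim xT])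
    have Tx: "T - x \<le> (R x)\<^sup>2"
      proof - have "1 * (T - x) \<le> (2 * m) * (T - x)" by (rule mult_right_mono) (use m1 xT in auto) thus ?thesis using low by simp qed
    have sq: "R x powr (-3/2) = ((R x)\<^sup>2) powr (-3/4)"
    proof -
      have "((R x)\<^sup>2) powr (-3/4) = (R x powr 2) powr (-3/4)"
        using Rp by (simp add: powr_realpow)
      also have "\<dots> = R x powr (-3/2)" by (simp add: powr_powr)
      finally show ?thesis by simp
    qed
    have b2: "R x powr (-3/2) \<le> (T - x) powr (-3/4)"
      unfolding sq by (rule powr_mono2') (use Tx xT in auto)
    have "- (R x * Q x) \<le> C2 * (T - x) powr (-3/4)"
    proof -
      have "- (R x * Q x) \<le> C2 * (R x * R x powr (-5/2))" using b1 by (simp add: algebra_simps)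
      also have "\<dots> = C2 * R x powr (-3/2)" using pw by simp
      also have "\<dots> \<le> C2 * (T - x) powr (-3/4)" using b2 C2 by (simp add: mult_left_mono)
      finally show ?thesis .
    qed
    hence "0 \<le> 2 * R x * D x + 2 * m + 2 * C2 * (T - x) powr (-3/4)" using e by linarith
    with d show "(\<phi> has_real_derivative 2 * R x * D x + 2 * m + 2 * C2 * (T - x) powr (-3/4)) (at x) \<and>
        0 \<le> 2 * R x * D x + 2 * m + 2 * C2 * (T - x) powr (-3/4)" by blast
  qed (use that in auto)
  have phile: "\<phi> s \<le> (R s)\<^sup>2" if "s < T" for s
  proof -
    have "0 \<le> 2 * m * (T - s)" using m1 that by simp
    moreover have "0 \<le> 8 * C2 * (T - s) powr (1/4)" using C2 by simp
    ultimately show ?thesis unfolding \<phi>_def by linarith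
  qed
  have main: "\<phi> t \<le> C1\<^sup>2"
  proof (cases "\<exists>s0. t \<le> s0 \<and> s0 < T \<and> R s0 < C1")
    case True
    then obtain s0 where s0: "t \<le> s0" "s0 < T" "R s0 < C1" by blast
    have cont: "continuous_on {t..s0} R"
      by (rule DERIV_atLeastAtMost_imp_continuous_on) (meson der s0(2) order_le_less_trans)
    obtain s where s: "t \<le> s" "s \<le> s0" "R s = C1"
      using IVT2'[of R s0 C1 t, OF _ Rt s0(1) cont] s0(3) by auto
    have "\<phi> t \<le> \<phi> s" using key[of s] s s0 by simp
    also have "\<dots> \<le> C1\<^sup>2" using phile[of s] s s0 by simp
    finally show ?thesis .
  next
    case False
    have l: "((\<lambda>u. (R u)\<^sup>2) \<longlongrightarrow> 0\<^sup>2) (at_left T)"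
      by (intro tendsto_intros lim)
    have ev: "eventually (\<lambda>u. \<phi> t \<le> (R u)\<^sup>2) (at_left T)"
      using eventually_at_left_real[OF tT]
    proof eventually_elim
      case (elim u)
      hence "R u \<ge> C1" using False by auto
      hence "\<phi> t \<le> \<phi> u" using key[of u] elim by simp
      also have "\<dots> \<le> (R u)\<^sup>2" using phile[of u] elim by simp
      finally show ?case .
    qed
    have "\<phi> t \<le> 0\<^sup>2" by (rule tendsto_lowerbound[OF l ev]) simp
    thus ?thesis by (metis order_trans zero_le_power2 power_zero_numeral)
  qed
  thus ?thesis unfolding \<phi>_def by simp
qed


lemma div_le_self_aux:
  fixes a d :: real assumes "0 \<le> a" "1 \<le> d" shows "a / d \<le> a"
proof -
  have "a / d \<le> a / 1" by (rule divide_left_mono) (use assms in auto)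
  thus ?thesis by simp
qed

theorem corollary6p7:
  fixes n :: nat and r rz rzz rt :: "real \<Rightarrow> real \<Rightarrow> real" and T :: "real \<Rightarrow> real"
    and C1 C2 :: real
  assumes "n \<ge> 3"
    and "rot_mcf_profile n r rz rzz rt T"
    and "\<And>z t. z < 0 \<Longrightarrow> t < T z \<Longrightarrow> r z t \<ge> C1 \<Longrightarrow>
           0 \<le> - rzz z t \<and> - rzz z t \<le> C2 * r z t powr (-5/2)"
  shows "\<exists>R0. \<forall>z t. z < 0 \<longrightarrow> t < T z \<longrightarrow> r z t \<ge> R0 \<longrightarrow>
           2 * (real n - 1) * (T z - t) \<le> (r z t)\<^sup>2 \<and>
           (r z t)\<^sup>2 \<le> 2 * (real n - 1) * (T z - t) + 8 * C2 * (T z - t) powr (1/4) + C1\<^sup>2"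
proof (intro exI[of _ C1] allI impI)
  fix z t assume z: "z < 0" and tT: "t < T z" and Rt: "r z t \<ge> C1"
  note P = assms(2)[unfolded rot_mcf_profile_def, rule_format, OF z]
  define Q where "Q s = rzz z s / (1 + (rz z s)\<^sup>2)" for s
  have der: "\<And>s. s < T z \<Longrightarrow> ((\<lambda>s. r z s) has_real_derivative rt z s) (at s)"
    using P by blast
  have pos: "\<And>s. s < T z \<Longrightarrow> r z s > 0" using P by blast
  have eq: "\<And>s. s < T z \<Longrightarrow> rt z s = Q s - (real n - 1) / r z s"
    using P unfolding Q_def by blast
  have qneg: "\<And>s. s < T z \<Longrightarrow> Q s < 0"
  proof -
    fix s assume "s < T z"
    hence "rzz z s < 0" using P by blast
    moreover have "0 < 1 + (rz z s)\<^sup>2" by (simp add: add_pos_nonneg)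
    ultimately show "Q s < 0" unfolding Q_def by (simp add: divide_neg_pos)
  qed
  have dneg: "\<And>s. s < T z \<Longrightarrow> rt z s < 0" using P by blast
  have lim: "((\<lambda>s. r z s) \<longlongrightarrow> 0) (at_left (T z))" using P by blast
  have bnd: "\<And>s. s < T z \<Longrightarrow> r z s \<ge> C1 \<Longrightarrow> - Q s \<le> C2 * r z s powr (-5/2)"
  proof -
    fix s assume s: "s < T z" "r z s \<ge> C1"
    have h: "0 \<le> - rzz z s" "- rzz z s \<le> C2 * r z s powr (-5/2)" using assms(3)[OF z s] by auto
    have "- Q s = (- rzz z s) / (1 + (rz z s)\<^sup>2)" unfolding Q_def by simp
    also have "\<dots> \<le> - rzz z s" by (rule div_le_self_aux) (use h in auto)
    finally show "- Q s \<le> C2 * r z s powr (-5/2)" using h by linarith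
  qed
  have C2: "C2 \<ge> 0"
  proof -
    have h: "0 \<le> - rzz z t" "- rzz z t \<le> C2 * r z t powr (-5/2)" using assms(3)[OF z tT Rt] by auto
    have "0 < r z t powr (-5/2)" using pos[OF tT] by simp
    hence "0 \<le> C2 * r z t powr (-5/2)" using h by linarith
    thus ?thesis using \<open>0 < r z t powr (-5/2)\<close> by (simp add: zero_le_mult_iff)
  qed
  have m1: "real n - 1 \<ge> 1" using assms(1) by simp
  show "2 * (real n - 1) * (T z - t) \<le> (r z t)\<^sup>2 \<and>
           (r z t)\<^sup>2 \<le> 2 * (real n - 1) * (T z - t) + 8 * C2 * (T z - t) powr (1/4) + C1\<^sup>2"
  proof
    show "2 * (real n - 1) * (T z - t) \<le> (r z t)\<^sup>2"
      by (rule lower_aux[where R = "\<lambda>s. r z s", OF der pos eq qneg lim tT])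
    show "(r z t)\<^sup>2 \<le> 2 * (real n - 1) * (T z - t) + 8 * C2 * (T z - t) powr (1/4) + C1\<^sup>2"
      by (rule upper_aux[where R = "\<lambda>s. r z s", OF der pos eq qneg dneg lim bnd m1 C2 tT Rt])
  qed
qed

end
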